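(* Consider the deterministic multiclass single-server system MCSS(RO) described in the context, with all $\lambda_j>0$, $\rho<1$, and constants $\Gamma_{a,j},\Gamma_{s,j}\ge0$ such that for all $k\ge1$ and $j=1,\dots,J$, $$\Big|\sum_{i=1}^k U^j_i-\lambda_j^{-1}k\Big|\le\Gamma_{a,j}\phi(k),\qquad \Big|\sum_{i=1}^k V^j_i-\mu_j^{-1}k\Big|\le\Gamma_{s,j}\phi(k).$$ Let $\Gamma=\max_j(\Gamma_{a,j},\Gamma_{s,j})$ and assume $\min_j\lambda_j\Gamma\ge e^{2e}$. Let $B$ be the duration of the busy period initiated at time $0$. Then $$B\le \frac{5(4J+3)^2\bar\lambda_{\max}^3\Gamma^4}{(1-\rho)^2}\ln\ln\frac{2(4J+3)\bar\lambda_{\max}^2\Gamma^2}{1-\rho},$$ and $$\sup_{0\le t\le B}W(t)\le \frac{2(4J+3)^2\bar\lambda_{\max}^3\Gamma^4}{1-\rho}\ln\ln\frac{(4J+3)\bar\lambda_{\max}^2\Gamma^2}{1-\rho}+\Gamma+3\bar\lambda_{\max}^2\Gamma^3.$$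
   Context: $\phi(x)=\sqrt{x\ln\ln x}$ for $x\ge e^e$ and $\phi(x)=1$ otherwise. MCSS(RO): one server, $J$ job classes with infinite buffers $B_1,\dots,B_J$; at time $0$ there is exactly one job in every buffer. For class $j$, deterministic nonnegative sequences $(U^j_k)_{k\ge1}$ (the $k$-th external arrival to class $j$ occurs at time $\sum_{i\le k}U^j_i$) and $(V^j_k)_{k\ge1}$ (service requirement of the $k$-th job of class $j$). $A_j(t)=\max\{k\ge0:\sum_{i=1}^kU^j_i\le t\}$, $A(t)=(A_j(t))_j$. Routing matrix $P\in\{0,1\}^{J\times J}$ with row sums in $\{0,1\}$ and $P^N=0$ for some $N$: after service in class $i$ a job moves to class $j$ if $P_{ij}=1$, otherwise leaves. The scheduling policy is an arbitrary work-conserving policy (FIFO within a class). $\lambda=(\lambda_j)$, $\bar\lambda=(I-P^T)^{-1}\lambda$, $\bar\lambda_{\max}=\max_j\bar\lambda_j$, $\bar A(t)=(I-P^T)^{-1}A(t)$, $m_j=\mu_j^{-1}$, $\rho=\sum_j\bar\lambda_j/\mu_j$. $W(t)$ is the workload at time $t$ (time needed to clear all work present, without further external arrivals); during the busy period starting at $0$ the paper uses the identity $W(t)=\sum_{j=1}^J\sum_{i=1}^{\bar A_j(t)}V^j_i-t$, and $B$ is the end of this busy period. *)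

theory Defs
  imports "HOL-Analysis.Analysis"
begin

definition phi :: "real \<Rightarrow> real" where
  "phi x = (if x \<ge> exp (exp 1) then sqrt (x * ln (ln x)) else 1)"

text \<open>Matrix power (the vec power of the library is componentwise, so we define it).\<close>
fun matpow :: "real^'n^'n \<Rightarrow> nat \<Rightarrow> real^'n^'n" where
  "matpow A 0 = mat 1"
| "matpow A (Suc n) = A ** matpow A n"

definition routing_matrix :: "real^'j^'j \<Rightarrow> bool" where
  "routing_matrix P \<longleftrightarrow>
     (\<forall>i j. P $ i $ j = 0 \<or> P $ i $ j = 1) \<and>
     (\<forall>i. (\<Sum>j\<in>UNIV. P $ i $ j) = 0 \<or> (\<Sum>j\<in>UNIV. P $ i $ j) = 1) \<and>
     (\<exists>N. matpow P N = 0)"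

definition arr :: "('j \<Rightarrow> nat \<Rightarrow> real) \<Rightarrow> 'j \<Rightarrow> real \<Rightarrow> nat" where
  "arr U j t = (GREATEST k. (\<Sum>i=1..k. U j i) \<le> t)"

definition arr_vec :: "('j::finite \<Rightarrow> nat \<Rightarrow> real) \<Rightarrow> real \<Rightarrow> real^'j" where
  "arr_vec U t = (\<chi> j. real (arr U j t))"

definition visit_matrix :: "real^'j^'j \<Rightarrow> real^'j^'j" where
  "visit_matrix P = matrix_inv (mat 1 - transpose P)"

definition tot_arr :: "real^'j^'j \<Rightarrow> ('j::finite \<Rightarrow> nat \<Rightarrow> real) \<Rightarrow> real \<Rightarrow> real^'j" where
  "tot_arr P U t = visit_matrix P *v arr_vec U t"

text \<open>Workload during the busy period starting at 0, via the paper's identity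
  W(t) = sum_j sum_{i=1}^{\bar A_j(t)} V^j_i - t.\<close>
definition workload ::
  "real^'j^'j \<Rightarrow> ('j::finite \<Rightarrow> nat \<Rightarrow> real) \<Rightarrow> ('j \<Rightarrow> nat \<Rightarrow> real) \<Rightarrow> real \<Rightarrow> real" where
  "workload P U V t =
     (\<Sum>j\<in>UNIV. \<Sum>i=1..nat \<lfloor>tot_arr P U t $ j\<rfloor>. V j i) - t"

definition busy_end ::
  "real^'j^'j \<Rightarrow> ('j::finite \<Rightarrow> nat \<Rightarrow> real) \<Rightarrow> ('j \<Rightarrow> nat \<Rightarrow> real) \<Rightarrow> real" where
  "busy_end P U V = Inf {t. 0 \<le> t \<and> workload P U V t \<le> 0}"

end

theory Submission
  imports Defs
begin


lemma mm_diff_r: "((A::real^'n^'n) - B) ** C = A ** C - B ** C"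
  by (simp add: matrix_matrix_mult_def vec_eq_iff sum_subtractf algebra_simps)
lemma mm_diff_l: "(C::real^'n^'n) ** (A - B) = C ** A - C ** B"
  by (simp add: matrix_matrix_mult_def vec_eq_iff sum_subtractf algebra_simps)
lemma mm_add_r: "((A::real^'n^'n) + B) ** C = A ** C + B ** C"
  by (simp add: matrix_matrix_mult_def vec_eq_iff sum.distrib algebra_simps)

lemma matpow_Suc': "matpow A (Suc n) = matpow A n ** A"
  by (induction n) (simp_all add: matrix_mul_assoc)

lemma matpow_comm: "matpow A n ** A = A ** matpow A n"
  using matpow_Suc'[of A n] by simp

lemma matpow_transpose: "transpose (matpow A n) = matpow (transpose A) n"
proof (induction n)
  case 0 then show ?case by simp
next
  case (Suc n) then show ?case by (simp add: matrix_transpose_mul) (metis matpow_comm)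
qed

lemma matpow_nonneg: "(\<forall>i j. A $ i $ j \<ge> 0) \<Longrightarrow> matpow A n $ i $ j \<ge> (0::real)"
proof (induction n arbitrary: i j)
  case 0 then show ?case by (simp add: mat_def)
next
  case (Suc n) then show ?case
    by (auto simp: matrix_matrix_mult_def intro!: sum_nonneg)
qed

lemma geom_left: "(mat 1 - A) ** (\<Sum>n<N. matpow (A::real^'n^'n) n) = mat 1 - matpow A N"
proof (induction N)
  case 0 then show ?case by (simp add: matrix_matrix_mult_def vec_eq_iff)
next
  case (Suc N) then show ?case by (simp add: matrix_add_ldistrib mm_diff_r)
qed

lemma geom_right: "(\<Sum>n<N. matpow (A::real^'n^'n) n) ** (mat 1 - A) = mat 1 - matpow A N"
proof (induction N)
  case 0 then show ?case by (simp add: matrix_matrix_mult_def vec_eq_iff)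
next
  case (Suc N)
  have "(\<Sum>n<Suc N. matpow A n) ** (mat 1 - A) = (\<Sum>n<N. matpow A n) ** (mat 1 - A) + (matpow A N - matpow A (Suc N))"
  proof -
    have "matpow A N ** (mat 1 - A) = matpow A N - matpow A (Suc N)"
      by (simp only: mm_diff_l matrix_mul_rid matpow_comm matpow.simps)
    then show ?thesis by (simp only: sum.lessThan_Suc mm_add_r)
  qed
  also have "\<dots> = mat 1 - matpow A (Suc N)" using Suc by simp
  finally show ?case .
qed

lemma visit_props:
  fixes P :: "real^'j::finite^'j"
  assumes "routing_matrix P"
  shows "\<And>i j. visit_matrix P $ i $ j \<ge> 0" "\<And>i. visit_matrix P $ i $ i \<ge> 1"
proof -
  define Q where "Q = transpose P"
  obtain N where N: "matpow P N = 0" using assms unfolding routing_matrix_def by blast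
  have QN: "matpow Q N = 0" 
  proof -
    have "transpose (0::real^'j^'j) = 0" by (simp add: transpose_def vec_eq_iff)
    then show ?thesis using N matpow_transpose[of P N] unfolding Q_def by metis
  qed
  have Qnn: "\<forall>i j. Q $ i $ j \<ge> 0" 
  proof (intro allI)
    fix i j
    have "P $ j $ i = 0 \<or> P $ j $ i = 1" using assms unfolding routing_matrix_def by blast
    then show "Q $ i $ j \<ge> 0" unfolding Q_def transpose_def by auto
  qed
  define R where "R = (\<Sum>n<N. matpow Q n)"
  have l: "(mat 1 - Q) ** R = mat 1" and r: "R ** (mat 1 - Q) = mat 1"
    using geom_left[of Q N] geom_right[of Q N] QN unfolding R_def by simp_all
  have inv: "matrix_inv (mat 1 - Q) = R"
  proof -
    let ?M = "matrix_inv (mat 1 - Q)"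
    have "(mat 1 - Q) ** ?M = mat 1 \<and> ?M ** (mat 1 - Q) = mat 1"
      unfolding matrix_inv_def by (rule someI[of _ R]) (use l r in auto)
    then have "R ** ((mat 1 - Q) ** ?M) = R" by simp
    then show ?thesis by (simp add: matrix_mul_assoc r)
  qed
  have Vd: "visit_matrix P = R" using inv by (simp add: visit_matrix_def Q_def)
  have RN: "R $ i $ j = (\<Sum>n<N. matpow Q n $ i $ j)" for i j
    by (simp add: R_def)
  show "visit_matrix P $ i $ j \<ge> 0" for i j
    unfolding Vd RN by (intro sum_nonneg matpow_nonneg Qnn)
  show "visit_matrix P $ i $ i \<ge> 1" for i
  proof -
    have "N \<noteq> 0" proof
      assume "N = 0" then have "mat 1 = (0::real^'j^'j)" using N by simp
      then have "(mat 1 :: real^'j^'j) $ i $ i = (0::real^'j^'j) $ i $ i" by simp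
      then show False by (simp add: mat_def)
    qed
    then have "{0} \<subseteq> {..<N}" by auto
    then have "(\<Sum>n\<in>{0}. matpow Q n $ i $ i) \<le> (\<Sum>n<N. matpow Q n $ i $ i)"
      by (intro sum_mono2) (auto intro: matpow_nonneg[OF Qnn])
    then show ?thesis unfolding Vd RN by (simp add: mat_def)
  qed
qed


lemma lnln_ge1: "exp (exp 1) \<le> (x::real) \<Longrightarrow> exp 1 \<le> ln x \<and> 1 \<le> ln (ln x)"
proof -
  assume a: "exp (exp 1) \<le> x"
  have "0 < x" using a exp_gt_zero[of "exp 1"] by linarith
  then have "exp 1 \<le> ln x" using a by (metis ln_exp ln_le_cancel_iff exp_gt_zero)
  moreover then have "1 \<le> ln (ln x)"
    by (metis exp_gt_zero ln_exp ln_le_cancel_iff order_less_le_trans)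
  ultimately show ?thesis by simp
qed

lemma lnln_mono: "exp 1 \<le> (a::real) \<Longrightarrow> a \<le> b \<Longrightarrow> ln (ln a) \<le> ln (ln b)"
proof -
  assume a: "exp 1 \<le> a" and ab: "a \<le> b"
  have e2: "exp 1 \<ge> (2::real)" using exp_ge_add_one_self[of 1] by simp
  have "a > 0" using a e2 by linarith
  have la: "ln a \<ge> 1" using a \<open>a > 0\<close> by (metis ln_exp ln_le_cancel_iff exp_gt_zero)
  have "ln a \<le> ln b" using ab \<open>a > 0\<close> by simp
  then show ?thesis using la by simp
qed

lemma mono_helper: "(0::real) \<le> a \<Longrightarrow> 1 \<le> X \<Longrightarrow> a \<le> a * X"
  using mult_left_mono[of 1 X a] by simp

lemma consts_bound:
  fixes L G s J :: real
  assumes L: "L > 0" and G: "G > 0" and LG: "exp (2*exp 1) \<le> L*G" and s0: "0 < s" and s1: "s \<le> 1"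
    and J: "J \<ge> 1"
  defines "d1 \<equiv> 1/(2*L*G)" and "d2 \<equiv> s/(4*G*(J+1)*L)"
  defines "D1 \<equiv> ln(ln(1/d1^2))/d1" and "D2 \<equiv> ln(ln(1/d2^2))/d2"
  shows "exp(exp 1) \<le> 1/d1^2" "exp(exp 1) \<le> 1/d2^2"
   "G*D1 + 2*(J+1)*G*D2/s \<le> 5 * (4 * J + 3)^2 * L^3 * G^4 / s^2
                 * ln (ln (2 * (4 * J + 3) * L^2 * G^2 / s))"
   "s*G*D1/2 + (J+1)*G*D2 \<le> 2 * (4 * J + 3)^2 * L^3 * G^4 / s
                 * ln (ln ((4 * J + 3) * L^2 * G^2 / s))
                 + G + 3 * L^2 * G^3"
proof -
  define X where "X = L^2 * G^2"
  define K where "K = 4 * J + 3"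
  define Z where "Z = K * X / s"
  have e2: "exp 1 \<ge> (2::real)" using exp_ge_add_one_self[of 1] by simp
  have ee: "exp 1 \<le> exp (exp (1::real))" using exp_ge_add_one_self[of "exp 1"] by linarith
  have e2e: "exp (exp 1) \<le> exp (2 * exp (1::real))" by simp
  have LG1: "L * G \<ge> exp (exp 1)" using LG e2e by linarith
  have LGe: "L * G \<ge> 2" using LG1 ee e2 by linarith
  have Xeq: "X = (L*G)^2" by (simp add: X_def power_mult_distrib)
  have X1: "X \<ge> L * G"
  proof -
    have "L*G * 1 \<le> L*G * (L*G)" using LGe by (intro mult_left_mono) simp_all
    then show ?thesis by (simp add: Xeq power2_eq_square)
  qed
  have Xe: "X \<ge> exp (exp 1)" using X1 LG1 by linarith
  have X2: "X \<ge> 2" using X1 LGe by linarith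
  have Xpos: "X > 0" using X2 by simp
  have K: "K \<ge> 7" using J by (simp add: K_def)
  have i1: "1/d1^2 = 4 * X" using L G by (simp add: d1_def X_def power2_eq_square field_simps)
  have i1': "1/d1 = 2*L*G" using L G by (simp add: d1_def)
  have i2: "1/d2^2 = 16 * (J+1)^2 * X / s^2" using L G s0 J
    by (simp add: d2_def X_def power2_eq_square field_simps)
  have i2': "1/d2 = 4*G*(J+1)*L/s" using L G s0 J by (simp add: d2_def)
  have c1e: "exp(exp 1) \<le> 4 * X" using Xe Xpos by linarith
  have c2ge: "16 * (J+1)^2 * X / s^2 \<ge> X"
  proof -
    have "s^2 \<le> 1" using s0 s1 by (simp add: power_le_one)
    have "(J+1)^2 \<ge> 1" using J by simp
    then have "1 * X \<le> (16 * (J+1)^2) * X" using Xpos by (intro mult_right_mono) simp_all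
    then have "16 * (J+1)^2 * X \<ge> X" by simp
    moreover have "16 * (J+1)^2 * X / s^2 \<ge> 16 * (J+1)^2 * X" using \<open>s^2 \<le> 1\<close> s0 Xpos J
      by (simp add: le_divide_eq)
    ultimately show ?thesis by linarith
  qed
  show "exp(exp 1) \<le> 1/d1^2" using i1 c1e by simp
  show "exp(exp 1) \<le> 1/d2^2" using i2 c2ge Xe by simp
  have D1eq: "D1 = 2*L*G * ln (ln (4*X))" using i1 i1' by (simp add: D1_def divide_inverse mult.commute)
  have D2eq: "D2 = 4*G*(J+1)*L/s * ln (ln (16 * (J+1)^2 * X / s^2))"
    using i2 i2' by (simp add: D2_def divide_inverse mult.commute)
  define w where "w = L * G^2"
  have wpos: "w > 0" using L G by (simp add: w_def)
  have s2: "s^2 \<le> 1" "s^2 > 0" using s0 s1 by (simp_all add: power_le_one)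
  have Z4X: "Z \<ge> 4 * X"
  proof -
    have "K * X \<ge> 4 * X" using K Xpos by (intro mult_right_mono) simp_all
    moreover have "K * X / s \<ge> K * X" using s0 s1 K Xpos by (simp add: le_divide_eq)
    ultimately show ?thesis by (simp add: Z_def)
  qed
  have Ze: "exp 1 \<le> Z" "exp (exp 1) \<le> Z" using Z4X Xe ee Xpos by linarith+
  have Zpos: "Z > 0" using Z4X Xpos by linarith
  have ll4X: "ln (ln (4*X)) \<le> ln (ln Z)" using c1e ee Z4X by (intro lnln_mono) linarith+
  have ll4Xnn: "ln (ln (4*X)) \<ge> 0" using lnln_ge1[OF c1e] by simp
  have llZ1: "ln (ln Z) \<ge> 1" using lnln_ge1[OF Ze(2)] by simp
  have llZ2: "ln (ln Z) \<le> ln (ln (2*Z))" using Ze Zpos by (intro lnln_mono) linarith+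
  define c2 where "c2 = 16 * (J+1)^2 * X / s^2"
  have c2e: "exp (exp 1) \<le> c2" using c2ge Xe by (simp add: c2_def)
  have c2Z: "c2 \<le> Z^2"
  proof -
    have "16 * (J+1)^2 \<le> 2 * K^2" using J by (simp add: K_def power2_eq_square algebra_simps)
    also have "\<dots> = K^2 * 2" by simp
    also have "\<dots> \<le> K^2 * X" using X2 by (intro mult_left_mono) simp_all
    finally have "16 * (J+1)^2 \<le> K^2 * X" .
    then have "16 * (J+1)^2 * X \<le> K^2 * X * X" using Xpos by (intro mult_right_mono) simp_all
    then have "16 * (J+1)^2 * X / s^2 \<le> K^2 * X * X / s^2" using s2 by (simp add: divide_right_mono)
    then show ?thesis by (simp add: c2_def Z_def power2_eq_square mult_ac)
  qed
  have llc2: "ln (ln c2) \<le> 2 * ln (ln Z)"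
  proof -
    have c2pos: "c2 > 0" using c2e exp_gt_zero[of "exp 1"] by linarith
    have lc2: "ln c2 \<ge> exp 1" using lnln_ge1[OF c2e] by simp
    have lZ: "ln Z \<ge> exp 1" using lnln_ge1[OF Ze(2)] by simp
    have "ln c2 \<le> ln (Z^2)" using c2Z c2pos Zpos by (metis ln_le_cancel_iff order_less_le_trans)
    also have "\<dots> = 2 * ln Z" using Zpos by (simp add: ln_realpow)
    finally have "ln (ln c2) \<le> ln (2 * ln Z)" using lc2 e2 by simp
    also have "\<dots> = ln 2 + ln (ln Z)" using lZ e2 by (simp add: ln_mult)
    also have "\<dots> \<le> 2 * ln (ln Z)" using llZ1 ln_le_minus_one[of 2] by simp
    finally show ?thesis .
  qed
  have D1w: "G*D1 = 2 * w * ln (ln (4*X))" by (simp add: D1eq w_def power2_eq_square)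
  have D2w: "(J+1)*G*D2 = 4 * (J+1)^2 * w / s * ln (ln c2)"
    by (simp add: D2eq w_def c2_def power2_eq_square)
  have Xw: "L^3 * G^4 = X * w" by (simp add: X_def w_def power2_eq_square power3_eq_cube
       power4_eq_xxxx)
  show "G*D1 + 2*(J+1)*G*D2/s \<le> 5 * (4 * J + 3)^2 * L^3 * G^4 / s^2
                 * ln (ln (2 * (4 * J + 3) * L^2 * G^2 / s))"
  proof -
    define l where "l = ln (ln (2*Z))"
    have l1: "l \<ge> 1" using llZ1 llZ2 by (simp add: l_def)
    define q where "q = w * l / s^2"
    have qnn: "q \<ge> 0" using wpos l1 s2 by (simp add: q_def)
    have a1: "G*D1 \<le> 2 * q"
    proof -
      have "G*D1 \<le> 2 * w * l" unfolding D1w l_def using ll4X llZ2 wpos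
        by (intro mult_left_mono) simp_all
      also have "\<dots> \<le> 2 * w * l / s^2" using s2 wpos l1 by (simp add: le_divide_eq)
      finally show ?thesis by (simp add: q_def)
    qed
    have a2: "2*(J+1)*G*D2/s \<le> 16 * (J+1)^2 * q"
    proof -
      have "2*(J+1)*G*D2/s = 2 * ((J+1)*G*D2) / s" by simp
      also have "\<dots> = 8 * (J+1)^2 * w / s^2 * ln (ln c2)" unfolding D2w using s0
        by (simp add: power2_eq_square field_simps)
      also have "\<dots> \<le> 8 * (J+1)^2 * w / s^2 * (2 * l)" using llc2 llZ2 wpos s2 J
        by (intro mult_left_mono) (simp_all add: l_def)
      also have "\<dots> = 16 * (J+1)^2 * q" by (simp add: q_def)
      finally show ?thesis .
    qed
    have "2 * q + 16 * (J+1)^2 * q = (2 + 16 * (J+1)^2) * q" by (simp add: algebra_simps)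
    also have "\<dots> \<le> (5 * K^2 * X) * q"
    proof (rule mult_right_mono[OF _ qnn])
      have "2 + 16 * (J+1)^2 \<le> 5 * K^2" using J by (simp add: K_def power2_eq_square algebra_simps)
      also have "\<dots> \<le> 5 * K^2 * X" using X2 by (intro mono_helper) simp_all
      finally show "2 + 16 * (J+1)^2 \<le> 5 * K^2 * X" .
    qed
    also have "\<dots> = 5 * (4 * J + 3)^2 * L^3 * G^4 / s^2 * ln (ln (2 * (4 * J + 3) * L^2 * G^2 / s))"
      unfolding q_def l_def Z_def K_def X_def w_def using s0 by (simp add: field_simps power2_eq_square power3_eq_cube power4_eq_xxxx)
    finally show ?thesis using a1 a2 by linarith
  qed
  show "s*G*D1/2 + (J+1)*G*D2 \<le> 2 * (4 * J + 3)^2 * L^3 * G^4 / s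
                 * ln (ln ((4 * J + 3) * L^2 * G^2 / s))
                 + G + 3 * L^2 * G^3"
  proof -
    define l where "l = ln (ln Z)"
    define q where "q = w * l / s"
    have qnn: "q \<ge> 0" using wpos llZ1 s0 by (simp add: q_def l_def)
    have a1: "s*G*D1/2 \<le> q"
    proof -
      have "s*G*D1/2 = s * (w * ln (ln (4*X)))" using D1w by simp
      also have "\<dots> \<le> 1 * (w * ln (ln (4*X)))" using s1 wpos ll4Xnn by (intro mult_right_mono) simp_all
      also have "\<dots> \<le> w * l" using ll4X wpos by (simp add: l_def)
      also have "\<dots> \<le> w * l / s" using s0 s1 wpos llZ1 by (simp add: le_divide_eq l_def)
      finally show ?thesis by (simp add: q_def)
    qed
    have a2: "(J+1)*G*D2 \<le> 8 * (J+1)^2 * q"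
    proof -
      have "(J+1)*G*D2 \<le> 4 * (J+1)^2 * w / s * (2 * l)" unfolding D2w l_def using llc2 wpos s0 J
        by (intro mult_left_mono) simp_all
      also have "\<dots> = 8 * (J+1)^2 * q" by (simp add: q_def)
      finally show ?thesis .
    qed
    have "q + 8 * (J+1)^2 * q = (1 + 8 * (J+1)^2) * q" by (simp add: algebra_simps)
    also have "\<dots> \<le> (2 * K^2 * X) * q"
    proof (rule mult_right_mono[OF _ qnn])
      have "1 + 8 * (J+1)^2 \<le> 2 * K^2" using J by (simp add: K_def power2_eq_square algebra_simps)
      also have "\<dots> \<le> 2 * K^2 * X" using X2 by (intro mono_helper) simp_all
      finally show "1 + 8 * (J+1)^2 \<le> 2 * K^2 * X" .
    qed
    also have "\<dots> = 2 * (4 * J + 3)^2 * L^3 * G^4 / s * ln (ln ((4 * J + 3) * L^2 * G^2 / s))"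
      unfolding q_def l_def Z_def K_def X_def w_def using s0 by (simp add: field_simps power2_eq_square power3_eq_cube power4_eq_xxxx)
    finally have "s*G*D1/2 + (J+1)*G*D2 \<le> 2 * (4 * J + 3)^2 * L^3 * G^4 / s * ln (ln ((4 * J + 3) * L^2 * G^2 / s))"
      using a1 a2 by linarith
    moreover have "G + 3 * L^2 * G^3 \<ge> 0" using L G by simp
    ultimately show ?thesis by linarith
  qed
qed
lemma phi_bound:
  fixes \<delta> z :: real
  assumes d: "\<delta> > 0" and c: "exp (exp 1) \<le> 1/\<delta>^2" and z: "z \<ge> 0"
  shows "phi z \<le> \<delta>*z + ln (ln (1/\<delta>^2))/\<delta>"
proof -
  define c where "c = 1/\<delta>^2"
  define lc where "lc = ln c"
  define llc where "llc = ln lc"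
  have cpos: "c > 0" using d by (simp add: c_def)
  have lc: "exp 1 \<le> lc" and llc: "1 \<le> llc" using lnln_ge1[of c] c unfolding c_def lc_def llc_def by auto
  have e2: "exp 1 \<ge> (2::real)" using exp_ge_add_one_self[of 1] by simp
  have dc: "\<delta>^2 * c = 1" using d by (simp add: c_def)
  have d1: "\<delta> \<le> 1"
  proof (rule ccontr)
    assume "\<not> \<delta> \<le> 1"
    then have "\<delta>^2 > 1" by (simp add: power_less_one_iff)
    hence "c < 1" unfolding c_def by (simp add: divide_less_eq)
    moreover have "c \<ge> exp (exp 1)" using c by (simp add: c_def)
    moreover have "exp (exp 1) \<ge> (1::real)" by simp
    ultimately show False by simp
  qed
  define z1 where "z1 = 4 * c * llc"
  have z1pos: "z1 > 0" using cpos llc by (simp add: z1_def)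
  have lnz1: "ln z1 = ln 4 + lc + ln llc" using cpos llc unfolding z1_def lc_def
    by (simp add: ln_mult)
  have ln2: "ln (2::real) \<le> 1" using ln_le_minus_one[of 2] by simp
  have ln4: "ln (4::real) \<le> 2" using ln2 ln_mult[of 2 2] by simp
  have lnllc: "ln llc \<le> llc" using ln_le_minus_one[of llc] llc by simp
  have llc_lc: "llc \<le> lc" using ln_le_minus_one[of lc] lc e2 unfolding llc_def by simp
  have lnz1_le: "ln z1 \<le> 3 * lc" using lnz1 ln4 lnllc llc_lc lc e2 by simp
  have lnz1_ge: "ln z1 \<ge> lc" using lnz1 ln4 llc by (simp add: ln_ge_zero)
  have lnz1pos: "ln z1 > 0" using lnz1_ge lc e2 by simp
  have ln3: "ln (3::real) \<le> 2" using ln_le_minus_one[of 3] by simp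
  have llz1: "ln (ln z1) \<le> 4 * llc"
  proof -
    have "ln (ln z1) \<le> ln (3 * lc)" using lnz1_le lnz1pos by simp
    also have "\<dots> = ln 3 + llc" using lc e2 unfolding llc_def by (simp add: ln_mult)
    also have "\<dots> \<le> 4 * llc" using ln3 llc by simp
    finally show ?thesis .
  qed
  have llz1_ge: "ln (ln z1) \<ge> 1"
  proof -
    have "ln z1 \<ge> exp 1" using lnz1_ge lc by simp
    then show ?thesis by (metis exp_gt_zero ln_exp ln_le_cancel_iff order_less_le_trans)
  qed
  have D: "ln (ln (1/\<delta>^2)) = llc" by (simp add: llc_def lc_def c_def)
  show ?thesis
  proof (cases "z < exp (exp 1)")
    case True
    then have "phi z = 1" by (simp add: phi_def)
    moreover have "1 \<le> llc / \<delta>" using d d1 llc by (simp add: le_divide_eq)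
    moreover have "\<delta> * z \<ge> 0" using d z by simp
    ultimately show ?thesis using D by simp
  next
    case False
    then have zb: "exp (exp 1) \<le> z" by simp
    have zl: "exp 1 \<le> ln z" "1 \<le> ln (ln z)" using lnln_ge1[OF zb] by auto
    have zpos: "z > 0" using zb exp_gt_zero[of "exp 1"] by linarith
    have phiz: "phi z = sqrt (z * ln (ln z))" using zb by (simp add: phi_def)
    show ?thesis
    proof (cases "z \<le> z1")
      case True
      have "ln z \<le> ln z1" using True zpos by simp
      then have "ln (ln z) \<le> ln (ln z1)" using zl e2 by simp
      then have lz: "ln (ln z) \<le> 4 * llc" using llz1 by simp
      have "z * ln (ln z) \<le> z * (4 * llc)" using lz zpos by simp
      also have "\<dots> \<le> (\<delta> * z + llc / \<delta>)^2"
      proof -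
        have "(\<delta> * z + llc / \<delta>)^2 - z * (4 * llc) = (\<delta> * z - llc / \<delta>)^2"
          using d by (simp add: power2_eq_square field_simps)
        then show ?thesis using zero_le_power2[of "\<delta> * z - llc / \<delta>"] by linarith
      qed
      finally have "sqrt (z * ln (ln z)) \<le> \<delta> * z + llc / \<delta>"
        using d zpos llc by (intro real_le_lsqrt) simp_all
      then show ?thesis using phiz D by simp
    next
      case False
      define r where "r = z / z1"
      have r1: "r > 1" using False z1pos by (simp add: r_def)
      have zr: "z = z1 * r" using z1pos by (simp add: r_def)
      have lnz: "ln z = ln z1 + ln r" using zr z1pos r1 by (simp add: ln_mult)
      have lnr: "ln r \<le> r - 1" using ln_le_minus_one r1 by simp
      have lnrpos: "ln r \<ge> 0" using r1 by simp
      have step1: "ln (ln z) \<le> ln (ln z1) + ln r / ln z1"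
      proof -
        have "ln z = ln z1 * (1 + ln r / ln z1)" using lnz lnz1pos by (simp add: field_simps)
        moreover have "1 + ln r / ln z1 > 0" using lnz1pos lnrpos by (simp add: add_pos_nonneg)
        ultimately have "ln (ln z) = ln (ln z1) + ln (1 + ln r / ln z1)"
          using lnz1pos by (simp add: ln_mult)
        moreover have "ln (1 + ln r / ln z1) \<le> ln r / ln z1"
          using ln_add_one_self_le_self[of "ln r / ln z1"] lnz1pos lnrpos by simp
        ultimately show ?thesis by simp
      qed
      have "ln r / ln z1 \<le> (r - 1) / ln z1" using lnr lnz1pos by (simp add: divide_right_mono)
      also have "\<dots> \<le> (r - 1) * ln (ln z1)"
      proof -
        have "1 / ln z1 \<le> 1" using lnz1_ge lc e2 by simp
        then have "1 / ln z1 \<le> ln (ln z1)" using llz1_ge by simp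
        then have "(r - 1) * (1 / ln z1) \<le> (r - 1) * ln (ln z1)" using r1 by (intro mult_left_mono) simp_all
        then show ?thesis by simp
      qed
      finally have "ln (ln z) \<le> r * ln (ln z1)" using step1 by (simp add: algebra_simps)
      also have "\<dots> \<le> r * (4 * llc)" using llz1 r1 by simp
      also have "\<dots> = \<delta>^2 * z" using dc unfolding zr z1_def by (simp add: algebra_simps)
      finally have "ln (ln z) \<le> \<delta>^2 * z" .
      then have "z * ln (ln z) \<le> z * (\<delta>^2 * z)" using zpos by (simp add: mult_left_mono)
      then have "z * ln (ln z) \<le> (\<delta> * z)^2" by (simp add: power2_eq_square algebra_simps)
      then have "sqrt (z * ln (ln z)) \<le> \<delta> * z" using d zpos by (simp add: real_le_lsqrt)
      moreover have "llc / \<delta> \<ge> 0" using llc d by simp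
      ultimately show ?thesis using phiz D by simp
    qed
  qed
qed

lemma phi_nonneg: "phi x \<ge> 0"
proof (cases "exp (exp 1) \<le> x")
  case True
  then have "x \<ge> 0" using exp_gt_zero[of "exp 1"] by linarith
  moreover have "ln (ln x) \<ge> 0" using lnln_ge1[OF True] by simp
  ultimately show ?thesis using True by (simp add: phi_def)
next
  case False then show ?thesis by (simp add: phi_def)
qed

theorem theorem2:
  fixes P :: "real^'j::finite^'j"
    and U V :: "'j \<Rightarrow> nat \<Rightarrow> real"
    and lam mu :: "real^'j"
    and Ga Gs :: "'j \<Rightarrow> real"
  assumes P: "routing_matrix P"
    and U_nonneg: "\<And>j k. U j k \<ge> 0"
    and V_nonneg: "\<And>j k. V j k \<ge> 0"
    and lam_pos: "\<And>j. lam $ j > 0"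
    and mu_pos: "\<And>j. mu $ j > 0"
    and rho_lt1: "(\<Sum>j\<in>UNIV. (visit_matrix P *v lam) $ j / mu $ j) < 1"
    and Ga_nonneg: "\<And>j. Ga j \<ge> 0"
    and Gs_nonneg: "\<And>j. Gs j \<ge> 0"
    and arr_bd: "\<And>j k. k \<ge> 1 \<Longrightarrow>
        \<bar>(\<Sum>i=1..k. U j i) - real k / lam $ j\<bar> \<le> Ga j * phi (real k)"
    and srv_bd: "\<And>j k. k \<ge> 1 \<Longrightarrow>
        \<bar>(\<Sum>i=1..k. V j i) - real k / mu $ j\<bar> \<le> Gs j * phi (real k)"
    and Gamma_large: "(MIN j. lam $ j) * (MAX j. max (Ga j) (Gs j)) \<ge> exp (2 * exp 1)"
  shows "let J = real CARD('j);
             \<Gamma> = (MAX j. max (Ga j) (Gs j));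
             lbm = (MAX j. (visit_matrix P *v lam) $ j);
             \<rho> = (\<Sum>j\<in>UNIV. (visit_matrix P *v lam) $ j / mu $ j);
             B = busy_end P U V
         in (\<exists>t\<ge>0. workload P U V t \<le> 0) \<and>
            B \<le> 5 * (4 * J + 3)^2 * lbm^3 * \<Gamma>^4 / (1 - \<rho>)^2
                 * ln (ln (2 * (4 * J + 3) * lbm^2 * \<Gamma>^2 / (1 - \<rho>))) \<and>
            (\<forall>t\<in>{0..B}. workload P U V t \<le>
                 2 * (4 * J + 3)^2 * lbm^3 * \<Gamma>^4 / (1 - \<rho>)
                 * ln (ln ((4 * J + 3) * lbm^2 * \<Gamma>^2 / (1 - \<rho>)))
                 + \<Gamma> + 3 * lbm^2 * \<Gamma>^3)"
proof -
  define Mx where "Mx = visit_matrix P"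
  define G where "G = (MAX j. max (Ga j) (Gs j))"
  define L where "L = (MAX j. (Mx *v lam) $ j)"
  define \<rho> where "\<rho> = (\<Sum>j\<in>UNIV. (Mx *v lam) $ j / mu $ j)"
  define s where "s = 1 - \<rho>"
  define Jr where "Jr = real CARD('j)"
  have Mnn: "\<And>i j. Mx $ i $ j \<ge> 0" and Mdiag: "\<And>i. Mx $ i $ i \<ge> 1"
    using visit_props[OF P] by (simp_all add: Mx_def)
  have Mlam: "(Mx *v lam) $ j = (\<Sum>i\<in>UNIV. Mx $ j $ i * lam $ i)" for j
    by (simp add: matrix_vector_mult_def)
  have Ga_le: "Ga j \<le> G" and Gs_le: "Gs j \<le> G" for j
  proof -
    have "max (Ga j) (Gs j) \<le> G" unfolding G_def by (rule Max_ge) auto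
    then show "Ga j \<le> G" "Gs j \<le> G" by auto
  qed
  have Lge: "(Mx *v lam) $ j \<le> L" for j unfolding L_def by (rule Max_ge) auto
  have lam_le_L: "lam $ j \<le> L" for j
  proof -
    have "lam $ j \<le> Mx $ j $ j * lam $ j" using Mdiag[of j] lam_pos[of j] by simp
    also have "\<dots> \<le> (\<Sum>i\<in>UNIV. Mx $ j $ i * lam $ i)"
      by (rule member_le_sum) (auto intro: mult_nonneg_nonneg Mnn less_imp_le lam_pos)
    finally show ?thesis using Mlam Lge by (metis order_trans)
  qed
  obtain j0 :: 'j where True by simp
  have minle: "(MIN j. lam $ j) \<le> lam $ j0" by (rule Min_le) auto
  have minpos: "(MIN j. lam $ j) > 0"
  proof -
    have "(MIN j. lam $ j) \<in> range (\<lambda>j. lam $ j)" by (rule Min_in) auto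
    then show ?thesis using lam_pos by auto
  qed
  have G0: "G \<ge> 0" using Ga_le[of j0] Ga_nonneg[of j0] by simp
  have expos: "exp (2 * exp 1) > (0::real)" by simp
  have Gpos: "G > 0"
  proof (rule ccontr)
    assume "\<not> G > 0"
    then have "G = 0" using G0 by simp
    then show False using Gamma_large expos by (simp add: G_def)
  qed
  have Lpos: "L > 0" using lam_le_L[of j0] lam_pos[of j0] by simp
  have LG: "exp (2 * exp 1) \<le> L * G"
  proof -
    have "(MIN j. lam $ j) * G \<le> L * G" using order_trans[OF minle lam_le_L[of j0]] G0
      by (rule mult_right_mono)
    then show ?thesis using Gamma_large by (simp add: G_def)
  qed
  have Mlnn: "(Mx *v lam) $ j \<ge> 0" for j unfolding Mlam
    by (intro sum_nonneg mult_nonneg_nonneg Mnn less_imp_le lam_pos)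
  have rho_nn: "\<rho> \<ge> 0" unfolding \<rho>_def
    using divide_nonneg_pos[OF Mlnn mu_pos] by (intro sum_nonneg) simp
  have s0: "s > 0" using rho_lt1 by (simp add: s_def \<rho>_def Mx_def)
  have s1: "s \<le> 1" using rho_nn by (simp add: s_def)
  have J1: "Jr \<ge> 1" by (simp add: Jr_def Suc_le_eq)
  define d1 where "d1 = 1/(2*L*G)"
  define d2 where "d2 = s/(4*G*(Jr+1)*L)"
  define D1 where "D1 = ln(ln(1/d1^2))/d1"
  define D2 where "D2 = ln(ln(1/d2^2))/d2"
  note CB = consts_bound[OF Lpos Gpos LG s0 s1 J1, folded d1_def d2_def, folded D1_def D2_def]
  have d1pos: "d1 > 0" and d2pos: "d2 > 0" using Lpos Gpos s0 J1 by (simp_all add: d1_def d2_def)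
  have ph1: "phi z \<le> d1 * z + D1" if "z \<ge> 0" for z
    using phi_bound[OF d1pos CB(1) that] by (simp add: D1_def)
  have ph2: "phi z \<le> d2 * z + D2" if "z \<ge> 0" for z
    using phi_bound[OF d2pos CB(2) that] by (simp add: D2_def)
  have D1nn: "D1 \<ge> 0" using lnln_ge1[OF CB(1)] d1pos by (simp add: D1_def)
  have D2nn: "D2 \<ge> 0" using lnln_ge1[OF CB(2)] d2pos by (simp add: D2_def)
  have Gd1: "G * d1 * lam $ i \<le> 1/2" for i
  proof -
    have "G * d1 * lam $ i = lam $ i / (2 * L)" using Gpos by (simp add: d1_def)
    also have "\<dots> \<le> L / (2 * L)" using lam_le_L[of i] Lpos by (simp add: divide_right_mono)
    also have "\<dots> = 1/2" using Lpos by simp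
    finally show ?thesis .
  qed
  define E where "E = s*G*D1/2 + (Jr+1)*G*D2"
  have gen: "real n \<le> lam $ i * (t + G * phi (real n))"
    if "(\<Sum>k=1..n. U i k) \<le> t" "t \<ge> 0" for i n t
  proof (cases "n = 0")
    case True then show ?thesis using that lam_pos[of i] G0 phi_nonneg[of 0] by simp
  next
    case False
    then have "\<bar>(\<Sum>k=1..n. U i k) - real n / lam $ i\<bar> \<le> Ga i * phi (real n)"
      by (intro arr_bd) simp
    moreover have "Ga i * phi (real n) \<le> G * phi (real n)"
      using Ga_le[of i] phi_nonneg by (intro mult_right_mono) simp_all
    ultimately have "real n / lam $ i \<le> t + G * phi (real n)" using that by linarith
    then show ?thesis using lam_pos[of i] by (simp add: divide_le_eq mult.commute)
  qed
  have genb: "real n \<le> 2 * lam $ i * (t + G * D1)"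
    if "(\<Sum>k=1..n. U i k) \<le> t" "t \<ge> 0" for i n t
  proof -
    have "real n \<le> lam $ i * (t + G * phi (real n))" by (rule gen[OF that])
    also have "\<dots> \<le> lam $ i * (t + G * (d1 * real n + D1))"
      using ph1[of "real n"] lam_pos[of i] G0 by (intro mult_left_mono) (simp_all add: mult_left_mono)
    also have "\<dots> = lam $ i * t + (G * d1 * lam $ i) * real n + lam $ i * G * D1"
      by (simp add: algebra_simps)
    also have "\<dots> \<le> lam $ i * t + (1/2) * real n + lam $ i * G * D1"
    proof -
      have "(G * d1 * lam $ i) * real n \<le> (1/2) * real n" using Gd1[of i] by (intro mult_right_mono) simp_all
      then show ?thesis by linarith
    qed
    finally show ?thesis by (simp add: algebra_simps)
  qed
  have W: "workload P U V t \<le> - s * t / 2 + E" if t0: "t \<ge> 0" for t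
  proof -
    define A where "A i = arr U i t" for i
    define b where "b i = nat \<lceil>2 * lam $ i * (t + G * D1)\<rceil>" for i
    have SA: "(\<Sum>k=1..A i. U i k) \<le> t" for i
    proof -
      have "(\<lambda>k. (\<Sum>k=1..k. U i k) \<le> t) (Greatest (\<lambda>k. (\<Sum>k=1..k. U i k) \<le> t))"
      proof (rule GreatestI_nat[where k = 0 and b = "b i"])
        show "(\<Sum>k=1..0. U i k) \<le> t" using t0 by simp
        fix y assume "(\<Sum>k=1..y. U i k) \<le> t"
        from genb[OF this t0] show "y \<le> b i" unfolding b_def by linarith
      qed
      then show ?thesis by (simp add: A_def arr_def)
    qed
    define Y where "Y = 2 * t + 2 * G * D1"
    have Ynn: "Y \<ge> 0" using t0 G0 D1nn by (simp add: Y_def)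
    have AY: "real (A i) \<le> lam $ i * Y" for i
    proof -
      define y where "y = t + G * phi (real (A i))"
      have Ay: "real (A i) \<le> lam $ i * y" using gen[OF SA t0] by (simp add: y_def)
      have ynn: "y \<ge> 0" using t0 G0 phi_nonneg by (simp add: y_def)
      have "G * phi (real (A i)) \<le> G * (d1 * real (A i) + D1)"
        using ph1[of "real (A i)"] G0 by (intro mult_left_mono) simp_all
      also have "\<dots> \<le> G * (d1 * (lam $ i * y) + D1)"
        using Ay G0 d1pos by (intro mult_left_mono add_right_mono) simp_all
      also have "\<dots> = (G * d1 * lam $ i) * y + G * D1" by (simp add: algebra_simps)
      also have "\<dots> \<le> (1/2) * y + G * D1" using Gd1[of i] ynn by (intro add_right_mono mult_right_mono) simp_all
      finally have "y \<le> Y" unfolding Y_def using y_def by linarith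
      then show ?thesis using Ay lam_pos[of i] by (meson less_imp_le mult_left_mono order_trans)
    qed
    define Phi where "Phi = d2 * L * Y + D2"
    have phA: "phi z \<le> Phi" if "0 \<le> z" "z \<le> L * Y" for z
    proof -
      have "phi z \<le> d2 * z + D2" using ph2 that by simp
      also have "\<dots> \<le> d2 * (L * Y) + D2" using that d2pos by (simp add: mult_left_mono)
      finally show ?thesis by (simp add: Phi_def mult.assoc)
    qed
    have AL: "real (A i) \<le> L * Y" for i
      using AY[of i] lam_le_L[of i] Ynn by (meson mult_right_mono order_trans)
    have A2: "real (A i) \<le> lam $ i * (t + G * Phi)" for i
    proof -
      have "real (A i) \<le> lam $ i * (t + G * phi (real (A i)))" using gen[OF SA t0] .
      also have "\<dots> \<le> lam $ i * (t + G * Phi)"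
        using phA[OF _ AL[of i]] G0 lam_pos[of i] by (intro mult_left_mono add_left_mono) simp_all
      finally show ?thesis .
    qed
    define Ab where "Ab j = tot_arr P U t $ j" for j
    have Abeq: "Ab j = (\<Sum>i\<in>UNIV. Mx $ j $ i * real (A i))" for j
      by (simp add: Ab_def tot_arr_def arr_vec_def matrix_vector_mult_def Mx_def A_def)
    have Abnn: "Ab j \<ge> 0" for j unfolding Abeq by (intro sum_nonneg mult_nonneg_nonneg Mnn) simp
    have AbL: "Ab j \<le> L * Y" for j
    proof -
      have "Ab j \<le> (\<Sum>i\<in>UNIV. Mx $ j $ i * (lam $ i * Y))" unfolding Abeq
        using AY Mnn by (intro sum_mono mult_left_mono) simp_all
      also have "\<dots> = (Mx *v lam) $ j * Y" by (simp add: Mlam sum_distrib_right mult.assoc)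
      also have "\<dots> \<le> L * Y" using Lge[of j] Ynn by (intro mult_right_mono) simp_all
      finally show ?thesis .
    qed
    define n where "n j = nat \<lfloor>Ab j\<rfloor>" for j
    have nle: "real (n j) \<le> Ab j" for j using Abnn[of j] by (simp add: n_def)
    have SV: "(\<Sum>k=1..n j. V j k) \<le> Ab j / mu $ j + G * Phi" for j
    proof -
      have ph: "phi (real (n j)) \<le> Phi" using phA[of "real (n j)"] nle[of j] AbL[of j] by simp
      have "(\<Sum>k=1..n j. V j k) \<le> real (n j) / mu $ j + G * phi (real (n j))"
      proof (cases "n j = 0")
        case True then show ?thesis using G0 phi_nonneg by simp
      next
        case False
        then have "\<bar>(\<Sum>k=1..n j. V j k) - real (n j) / mu $ j\<bar> \<le> Gs j * phi (real (n j))"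
          by (intro srv_bd) simp
        moreover have "Gs j * phi (real (n j)) \<le> G * phi (real (n j))"
          using Gs_le[of j] phi_nonneg by (intro mult_right_mono) simp_all
        ultimately show ?thesis by linarith
      qed
      also have "\<dots> \<le> Ab j / mu $ j + G * Phi"
        using nle[of j] mu_pos[of j] ph G0 by (intro add_mono divide_right_mono mult_left_mono) simp_all
      finally show ?thesis .
    qed
    have sumAb: "(\<Sum>j\<in>UNIV. Ab j / mu $ j) \<le> \<rho> * (t + G * Phi)"
    proof -
      have "(\<Sum>j\<in>UNIV. Ab j / mu $ j) \<le> (\<Sum>j\<in>UNIV. (\<Sum>i\<in>UNIV. Mx $ j $ i * (lam $ i * (t + G * Phi))) / mu $ j)"
        unfolding Abeq using Mnn A2 mu_pos
        by (intro sum_mono divide_right_mono mult_left_mono) (simp_all add: less_imp_le)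
      also have "\<dots> = (\<Sum>j\<in>UNIV. (Mx *v lam) $ j / mu $ j) * (t + G * Phi)"
        by (simp add: Mlam sum_distrib_right mult.assoc)
      finally show ?thesis by (simp add: \<rho>_def mult.commute)
    qed
    have "workload P U V t = (\<Sum>j\<in>UNIV. \<Sum>k=1..n j. V j k) - t"
      by (simp add: workload_def n_def Ab_def)
    also have "\<dots> \<le> (\<Sum>j\<in>UNIV. Ab j / mu $ j + G * Phi) - t"
      using SV by (simp add: sum_mono)
    also have "\<dots> = (\<Sum>j\<in>UNIV. Ab j / mu $ j) + Jr * G * Phi - t"
      by (simp add: sum.distrib Jr_def)
    also have "\<dots> \<le> \<rho> * (t + G * Phi) + Jr * G * Phi - t" using sumAb by simp
    also have "\<dots> \<le> - s * t + (Jr + 1) * G * Phi"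
    proof -
      have GP: "G * Phi \<ge> 0" using G0 d2pos Lpos Ynn D2nn by (simp add: Phi_def)
      have "\<rho> * (G * Phi) \<le> 1 * (G * Phi)" using s0 GP by (intro mult_right_mono) (simp_all add: s_def)
      then show ?thesis by (simp add: s_def algebra_simps)
    qed
    also have "\<dots> = - s * t / 2 + E"
    proof -
      have "(Jr + 1) * G * d2 * L = s / 4" using Gpos Lpos J1 by (simp add: d2_def)
      moreover have "(Jr + 1) * G * Phi = ((Jr + 1) * G * d2 * L) * Y + (Jr + 1) * G * D2"
        by (simp add: Phi_def algebra_simps)
      ultimately have "(Jr + 1) * G * Phi = s / 4 * Y + (Jr + 1) * G * D2" by simp
      then show ?thesis by (simp add: E_def Y_def algebra_simps)
    qed
    finally show ?thesis .
  qed
  define T where "T = 5 * (4 * Jr + 3)^2 * L^3 * G^4 / s^2 * ln (ln (2 * (4 * Jr + 3) * L^2 * G^2 / s))"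
  have TE: "2 * E / s \<le> T"
  proof -
    have "2 * E / s = G*D1 + 2*(Jr+1)*G*D2/s" using s0 by (simp add: E_def field_simps)
    then show ?thesis using CB(3) by (simp add: T_def)
  qed
  have Enn: "E \<ge> 0" using s0 G0 D1nn D2nn J1 by (simp add: E_def)
  have T0: "T \<ge> 0" using TE Enn s0 by (meson divide_nonneg_pos order_trans mult_nonneg_nonneg zero_le_numeral)
  have WT: "workload P U V T \<le> 0"
  proof -
    have "s * (2 * E / s) \<le> s * T" using TE s0 by (intro mult_left_mono) simp_all
    then have "2 * E \<le> s * T" using s0 by simp
    then show ?thesis using W[OF T0] by simp
  qed
  have ex: "\<exists>t\<ge>0. workload P U V t \<le> 0" using T0 WT by blast
  have BT: "busy_end P U V \<le> T" unfolding busy_end_def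
    by (rule cInf_lower) (use T0 WT in auto)
  have sup: "workload P U V t \<le> 2 * (4 * Jr + 3)^2 * L^3 * G^4 / s
                 * ln (ln ((4 * Jr + 3) * L^2 * G^2 / s)) + G + 3 * L^2 * G^3" if "t \<ge> 0" for t
  proof -
    have "workload P U V t \<le> - s * t / 2 + E" using W[OF that] .
    also have "\<dots> \<le> E" using s0 that by simp
    finally show ?thesis using CB(4) by (simp add: E_def)
  qed
  show ?thesis
    unfolding Let_def Mx_def[symmetric] G_def[symmetric] L_def[symmetric] \<rho>_def[symmetric]
      s_def[symmetric] Jr_def[symmetric]
    using ex BT sup by (auto simp: T_def)
qed

end
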